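(* Consider the Ising channel with ternary alphabet $\mathcal{X}=\mathcal{Y}=\mathcal{S}=\{0,1,2\}$ (defined in the context), used with noiseless causal output feedback. Its feedback capacity is $$C_{fb} = \max_{p \in [0,1]} 2\,\frac{H_2(p) + 1-p}{p+3},$$ and numerically $C_{fb} \approx 0.961227$, attained at $p \approx 0.263805$.
   Context: The Ising channel with alphabet $\mathcal{X}$ is a finite-state channel with input $X_t\in\mathcal{X}$, output $Y_t\in\mathcal{X}$ and state $S_{t-1}\in\mathcal{X}$. At each time $t$, given the current input $x_t$, the state $s_{t-1}$ and all the past, the output is $Y_t=x_t$ with probability $1/2$ and $Y_t=s_{t-1}$ with probability $1/2$, independently of everything else. The state then updates as $S_t=X_t$. In particular, if $x_t=s_{t-1}$ then $Y_t=x_t$ with probability $1$. The initial state $s_0$ is known to both encoder and decoder. In the feedback setting, the encoder chooses $x_t$ as a function of the message and the past outputs $y^{t-1}=(y_1,\dots,y_{t-1})$. The feedback capacity $C_{fb}$ is the supremum of achievable rates, in bits per channel use, with vanishing error probability. $H_2(p)=-p\log_2 p-(1-p)\log_2(1-p)$ is the binary entropy function. *)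

theory Defs
  imports "HOL-Analysis.Analysis"
begin

text \<open>Binary entropy in bits (log 2 0 = 0 in Isabelle, so H2 0 = H2 1 = 0).\<close>
definition H2 :: "real \<Rightarrow> real" where
  "H2 p = - p * log 2 p - (1 - p) * log 2 (1 - p)"

definition alph :: "nat set" where "alph = {0, 1, 2}"

text \<open>Ising channel law: probability of output y given input x and state s.
  Y = x w.p. 1/2 and Y = s w.p. 1/2 (so Y = x w.p. 1 if x = s).\<close>
definition ising_W :: "nat \<Rightarrow> nat \<Rightarrow> nat \<Rightarrow> real" where
  "ising_W s x y = (if y = x then 1/2 else 0) + (if y = s then 1/2 else 0)"

text \<open>A feedback encoder maps a message m and the past outputs y^{t-1}
  (a list of length t-1) to the channel input x_t.\<close>
type_synonym fb_encoder = "nat \<Rightarrow> nat list \<Rightarrow> nat"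
type_synonym decoder = "nat list \<Rightarrow> nat"

text \<open>Input at time t+1 (0-indexed t) under feedback.\<close>
definition fb_input :: "fb_encoder \<Rightarrow> nat \<Rightarrow> nat list \<Rightarrow> nat \<Rightarrow> nat" where
  "fb_input e m ys t = e m (take t ys)"

text \<open>Channel state before the (t+1)-th use: S_0 = s0, S_t = X_t.\<close>
definition fb_state :: "fb_encoder \<Rightarrow> nat \<Rightarrow> nat \<Rightarrow> nat list \<Rightarrow> nat \<Rightarrow> nat" where
  "fb_state e s0 m ys t = (if t = 0 then s0 else fb_input e m ys (t - 1))"

definition out_prob :: "fb_encoder \<Rightarrow> nat \<Rightarrow> nat \<Rightarrow> nat list \<Rightarrow> real" where
  "out_prob e s0 m ys =
     (\<Prod>t<length ys. ising_W (fb_state e s0 m ys t) (fb_input e m ys t) (ys ! t))"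

definition out_seqs :: "nat \<Rightarrow> nat list set" where
  "out_seqs n = {ys. length ys = n \<and> set ys \<subseteq> alph}"

definition avg_err :: "nat \<Rightarrow> nat \<Rightarrow> nat \<Rightarrow> fb_encoder \<Rightarrow> decoder \<Rightarrow> real" where
  "avg_err s0 n M e d =
     (1 / real M) * (\<Sum>m<M. \<Sum>ys\<in>out_seqs n. if d ys = m then 0 else out_prob e s0 m ys)"

definition valid_encoder :: "fb_encoder \<Rightarrow> bool" where
  "valid_encoder e \<longleftrightarrow> (\<forall>m ys. e m ys \<in> alph)"

definition achievable :: "nat \<Rightarrow> real \<Rightarrow> bool" where
  "achievable s0 R \<longleftrightarrow> R \<ge> 0 \<and>
     (\<forall>\<epsilon>>0. \<exists>N. \<forall>n\<ge>N. \<exists>M e d. M \<ge> 1 \<and> real M \<ge> 2 powr (real n * R) \<and>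
        valid_encoder e \<and> avg_err s0 n M e d \<le> \<epsilon>)"

definition fb_capacity :: "nat \<Rightarrow> real" where
  "fb_capacity s0 = Sup {R. achievable s0 R}"

definition ising3_rate :: "real \<Rightarrow> real" where
  "ising3_rate p = 2 * (H2 p + 1 - p) / (p + 3)"

end

theory Submission
  imports Defs
begin

definition stt :: "fb_encoder \<Rightarrow> nat \<Rightarrow> nat \<Rightarrow> nat list \<Rightarrow> nat" where
  "stt e s0 m ys = (if ys = [] then s0 else e m (butlast ys))"

lemma fb_state_snoc:
  assumes "t \<le> length ys"
  shows "fb_state e s0 m (ys @ [y]) t = fb_state e s0 m ys t"
  using assms by (auto simp: fb_state_def fb_input_def)

lemma fb_input_snoc:
  assumes "t \<le> length ys"
  shows "fb_input e m (ys @ [y]) t = fb_input e m ys t"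
  using assms by (auto simp: fb_input_def)

lemma fb_state_len: "fb_state e s0 m ys (length ys) = stt e s0 m ys"
  by (auto simp: fb_state_def fb_input_def stt_def butlast_conv_take)

lemma out_prob_Nil[simp]: "out_prob e s0 m [] = 1"
  by (simp add: out_prob_def)

lemma out_prob_snoc:
  "out_prob e s0 m (ys @ [y]) = out_prob e s0 m ys * ising_W (stt e s0 m ys) (e m ys) y"
proof -
  have "out_prob e s0 m (ys @ [y]) =
     (\<Prod>t<Suc (length ys). ising_W (fb_state e s0 m (ys@[y]) t) (fb_input e m (ys@[y]) t) ((ys@[y]) ! t))"
    by (simp add: out_prob_def)
  also have "\<dots> = (\<Prod>t<length ys. ising_W (fb_state e s0 m (ys@[y]) t) (fb_input e m (ys@[y]) t) ((ys@[y]) ! t))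
        * ising_W (fb_state e s0 m (ys@[y]) (length ys)) (fb_input e m (ys@[y]) (length ys)) ((ys@[y]) ! length ys)"
    by simp
  also have "(\<Prod>t<length ys. ising_W (fb_state e s0 m (ys@[y]) t) (fb_input e m (ys@[y]) t) ((ys@[y]) ! t))
     = out_prob e s0 m ys"
    unfolding out_prob_def
    by (rule prod.cong) (auto simp: fb_state_snoc fb_input_snoc nth_append)
  also have "fb_state e s0 m (ys@[y]) (length ys) = stt e s0 m ys"
    using fb_state_snoc[of "length ys" ys] fb_state_len by simp
  also have "fb_input e m (ys@[y]) (length ys) = e m ys"
    by (simp add: fb_input_def)
  finally show ?thesis by simp
qed

lemma ising_W_nonneg: "ising_W s x y \<ge> 0"
  by (simp add: ising_W_def)

lemma out_prob_nonneg: "out_prob e s0 m ys \<ge> 0"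
  unfolding out_prob_def by (intro prod_nonneg) (simp add: ising_W_nonneg)

lemma finite_alph[simp]: "finite alph" by (simp add: alph_def)

lemma sum_alph: "(\<Sum>y\<in>alph. f y) = f 0 + f 1 + (f 2 :: real)"
  by (simp add: alph_def)

lemma W_sum:
  assumes "s \<in> alph" "x \<in> alph"
  shows "(\<Sum>y\<in>alph. ising_W s x y * h y) = h x / 2 + h s / 2"
proof -
  have "(\<Sum>y\<in>alph. ising_W s x y * h y) =
        (\<Sum>y\<in>alph. (if y = x then h y / 2 else 0) + (if y = s then h y / 2 else 0))"
    by (rule sum.cong) (auto simp: ising_W_def)
  also have "\<dots> = (\<Sum>y\<in>alph. (if y = x then h y / 2 else 0)) + (\<Sum>y\<in>alph. (if y = s then h y / 2 else 0))"
    by (rule sum.distrib)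
  also have "\<dots> = h x / 2 + h s / 2"
    using assms finite_alph by (simp only: sum.delta sum.delta' if_True)
  finally show ?thesis .
qed

lemma W_sum1:
  assumes "s \<in> alph" "x \<in> alph"
  shows "(\<Sum>y\<in>alph. ising_W s x y) = 1"
  using W_sum[OF assms, of "\<lambda>_. 1"] by simp

lemma stt_alph:
  assumes "valid_encoder e" "s0 \<in> alph"
  shows "stt e s0 m ys \<in> alph"
  using assms by (auto simp: stt_def valid_encoder_def)

lemma out_seqs_Suc:
  "out_seqs (Suc n) = (\<lambda>(ys, y). ys @ [y]) ` (out_seqs n \<times> alph)"
proof (rule set_eqI, rule iffI)
  fix zs assume "zs \<in> out_seqs (Suc n)"
  then have "length zs = Suc n" "set zs \<subseteq> alph" by (auto simp: out_seqs_def)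
  then obtain ys y where "zs = ys @ [y]"
    by (metis append_butlast_last_id length_0_conv nat.distinct(1))
  with \<open>length zs = Suc n\<close> \<open>set zs \<subseteq> alph\<close> show "zs \<in> (\<lambda>(ys, y). ys @ [y]) ` (out_seqs n \<times> alph)"
    by (auto simp: out_seqs_def image_iff)
qed (auto simp: out_seqs_def)

lemma finite_out_seqs: "finite (out_seqs n)"
proof (induction n)
  case 0
  have "out_seqs 0 = {[]}" by (auto simp: out_seqs_def)
  then show ?case by simp
next
  case (Suc n)
  have "finite alph" by (simp add: alph_def)
  with Suc show ?case by (simp add: out_seqs_Suc)
qed

lemma out_seqs_0: "out_seqs 0 = {[]}" by (auto simp: out_seqs_def)

lemma sum_out_seqs_Suc:
  "(\<Sum>zs\<in>out_seqs (Suc n). f zs) = (\<Sum>ys\<in>out_seqs n. \<Sum>y\<in>alph. f (ys @ [y]))"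
proof -
  have inj: "inj_on (\<lambda>(ys, y). ys @ [y]) (out_seqs n \<times> alph)"
    by (auto simp: inj_on_def)
  have "(\<Sum>zs\<in>out_seqs (Suc n). f zs) = (\<Sum>p\<in>out_seqs n \<times> alph. f ((\<lambda>(ys, y). ys @ [y]) p))"
    unfolding out_seqs_Suc by (rule sum.reindex[OF inj, unfolded comp_def])
  also have "\<dots> = (\<Sum>ys\<in>out_seqs n. \<Sum>y\<in>alph. f (ys @ [y]))"
    by (simp add: sum.cartesian_product prod.case_distrib)
  finally show ?thesis .
qed

lemma out_prob_sum1:
  assumes "valid_encoder e" "s0 \<in> alph"
  shows "(\<Sum>ys\<in>out_seqs n. out_prob e s0 m ys) = 1"
proof (induction n)
  case 0 then show ?case by (simp add: out_seqs_0)
next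
  case (Suc n)
  have "(\<Sum>ys\<in>out_seqs (Suc n). out_prob e s0 m ys)
     = (\<Sum>ys\<in>out_seqs n. out_prob e s0 m ys * (\<Sum>y\<in>alph. ising_W (stt e s0 m ys) (e m ys) y))"
    by (simp add: sum_out_seqs_Suc out_prob_snoc sum_distrib_left)
  also have "\<dots> = (\<Sum>ys\<in>out_seqs n. out_prob e s0 m ys)"
    using assms by (simp add: W_sum1 stt_alph valid_encoder_def)
  finally show ?case using Suc by simp
qed

definition Ssum :: "(nat list \<Rightarrow> nat \<Rightarrow> real) \<Rightarrow> nat list \<Rightarrow> real" where
  "Ssum D ys = (\<Sum>t<length ys. D (take t ys) (ys ! t))"

lemma Ssum_Nil[simp]: "Ssum D [] = 0" by (simp add: Ssum_def)

lemma Ssum_snoc: "Ssum D (ys @ [y]) = Ssum D ys + D ys y"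
  unfolding Ssum_def by (simp add: nth_append)

lemma martingale_bound:
  assumes ve: "valid_encoder e" and s0: "s0 \<in> alph"
    and bnd: "\<And>ys y. \<bar>D ys y\<bar> \<le> B"
    and mart: "\<And>ys. out_prob e s0 m ys > 0 \<Longrightarrow>
        (\<Sum>y\<in>alph. ising_W (stt e s0 m ys) (e m ys) y * D ys y) = 0"
  shows "(\<Sum>ys\<in>out_seqs n. out_prob e s0 m ys * (Ssum D ys)\<^sup>2) \<le> real n * B\<^sup>2"
proof (induction n)
  case 0 then show ?case by (simp add: out_seqs_0)
next
  case (Suc n)
  let ?P = "out_prob e s0 m" and ?W = "\<lambda>ys y. ising_W (stt e s0 m ys) (e m ys) y"
  have step: "?P ys * (\<Sum>y\<in>alph. ?W ys y * (Ssum D ys + D ys y)\<^sup>2) \<le> ?P ys * (Ssum D ys)\<^sup>2 + ?P ys * B\<^sup>2"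
    if "ys \<in> out_seqs n" for ys
  proof (cases "?P ys > 0")
    case True
    have sx: "stt e s0 m ys \<in> alph" "e m ys \<in> alph" using ve s0 by (auto simp: stt_alph valid_encoder_def)
    have "(\<Sum>y\<in>alph. ?W ys y * (Ssum D ys + D ys y)\<^sup>2)
        = (Ssum D ys)\<^sup>2 * (\<Sum>y\<in>alph. ?W ys y) + 2 * Ssum D ys * (\<Sum>y\<in>alph. ?W ys y * D ys y)
          + (\<Sum>y\<in>alph. ?W ys y * (D ys y)\<^sup>2)"
      by (simp add: power2_eq_square algebra_simps sum.distrib sum_distrib_left)
    also have "\<dots> = (Ssum D ys)\<^sup>2 + (\<Sum>y\<in>alph. ?W ys y * (D ys y)\<^sup>2)"
      using mart[OF True] W_sum1[OF sx] by simp
    finally have eq: "(\<Sum>y\<in>alph. ?W ys y * (Ssum D ys + D ys y)\<^sup>2) = (Ssum D ys)\<^sup>2 + (\<Sum>y\<in>alph. ?W ys y * (D ys y)\<^sup>2)" .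
    have "(\<Sum>y\<in>alph. ?W ys y * (D ys y)\<^sup>2) \<le> (\<Sum>y\<in>alph. ?W ys y * B\<^sup>2)"
    proof (rule sum_mono)
      fix y
      have "(D ys y)\<^sup>2 \<le> B\<^sup>2"
        using bnd[of ys y] by (metis abs_ge_zero abs_le_square_iff power2_abs order_trans abs_ge_self)
      then show "?W ys y * (D ys y)\<^sup>2 \<le> ?W ys y * B\<^sup>2"
        by (simp add: mult_left_mono ising_W_nonneg)
    qed
    also have "(\<Sum>y\<in>alph. ?W ys y * B\<^sup>2) = B\<^sup>2"
      using W_sum1[OF sx] by (simp add: sum_distrib_right[symmetric])
    finally have "(\<Sum>y\<in>alph. ?W ys y * (Ssum D ys + D ys y)\<^sup>2) \<le> (Ssum D ys)\<^sup>2 + B\<^sup>2" using eq by linarith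
    then have "?P ys * (\<Sum>y\<in>alph. ?W ys y * (Ssum D ys + D ys y)\<^sup>2) \<le> ?P ys * ((Ssum D ys)\<^sup>2 + B\<^sup>2)"
      using True by (intro mult_left_mono) auto
    then show ?thesis by (simp add: distrib_left)
  next
    case False
    then have "?P ys = 0" using out_prob_nonneg[of e s0 m ys] by simp
    then show ?thesis by simp
  qed
  have "(\<Sum>ys\<in>out_seqs (Suc n). ?P ys * (Ssum D ys)\<^sup>2)
      = (\<Sum>ys\<in>out_seqs n. ?P ys * (\<Sum>y\<in>alph. ?W ys y * (Ssum D ys + D ys y)\<^sup>2))"
    by (simp add: sum_out_seqs_Suc out_prob_snoc Ssum_snoc sum_distrib_left mult.assoc)
  also have "\<dots> \<le> (\<Sum>ys\<in>out_seqs n. ?P ys * (Ssum D ys)\<^sup>2 + ?P ys * B\<^sup>2)"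
    by (rule sum_mono) (rule step)
  also have "\<dots> = (\<Sum>ys\<in>out_seqs n. ?P ys * (Ssum D ys)\<^sup>2) + B\<^sup>2"
    using out_prob_sum1[OF ve s0] by (simp add: sum.distrib sum_distrib_right[symmetric])
  also have "\<dots> \<le> real n * B\<^sup>2 + B\<^sup>2" using Suc by simp
  finally show ?case by (simp add: algebra_simps)
qed

lemma chebyshev:
  assumes ve: "valid_encoder e" and s0: "s0 \<in> alph"
    and bnd: "\<And>ys y. \<bar>D ys y\<bar> \<le> B"
    and mart: "\<And>ys. out_prob e s0 m ys > 0 \<Longrightarrow>
        (\<Sum>y\<in>alph. ising_W (stt e s0 m ys) (e m ys) y * D ys y) = 0"
    and a: "a > 0"
    and ev: "\<And>ys. ys \<in> out_seqs n \<Longrightarrow> out_prob e s0 m ys > 0 \<Longrightarrow> E ys \<Longrightarrow> \<bar>Ssum D ys\<bar> \<ge> a"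
  shows "(\<Sum>ys\<in>out_seqs n. if E ys then out_prob e s0 m ys else 0) \<le> real n * B\<^sup>2 / a\<^sup>2"
proof -
  let ?P = "out_prob e s0 m"
  have "(\<Sum>ys\<in>out_seqs n. if E ys then ?P ys else 0) \<le> (\<Sum>ys\<in>out_seqs n. ?P ys * (Ssum D ys)\<^sup>2 / a\<^sup>2)"
  proof (rule sum_mono)
    fix ys assume ys: "ys \<in> out_seqs n"
    show "(if E ys then ?P ys else 0) \<le> ?P ys * (Ssum D ys)\<^sup>2 / a\<^sup>2"
    proof (cases "E ys \<and> ?P ys > 0")
      case True
      then have "\<bar>Ssum D ys\<bar> \<ge> a" using ev ys by blast
      then have "a\<^sup>2 \<le> (Ssum D ys)\<^sup>2" using a
        by (metis abs_of_pos power2_abs power_mono less_imp_le)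
      then have "1 \<le> (Ssum D ys)\<^sup>2 / a\<^sup>2" using a by simp
      then have "?P ys * 1 \<le> ?P ys * ((Ssum D ys)\<^sup>2 / a\<^sup>2)"
        using True by (intro mult_left_mono) auto
      then show ?thesis using True by simp
    next
      case False
      then show ?thesis using out_prob_nonneg[of e s0 m ys]
        by (auto intro!: divide_nonneg_pos mult_nonneg_nonneg simp: a)
    qed
  qed
  also have "\<dots> = (\<Sum>ys\<in>out_seqs n. ?P ys * (Ssum D ys)\<^sup>2) / a\<^sup>2"
    by (simp add: sum_divide_distrib)
  also have "\<dots> \<le> real n * B\<^sup>2 / a\<^sup>2"
    using martingale_bound[OF ve s0 bnd mart] by (simp add: divide_right_mono)
  finally show ?thesis .
qed


lemma fpoly_mono:
  fixes a b :: real
  assumes "0 \<le> a" "a \<le> b"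
  shows "a^4 + 2*a^3 \<le> b^4 + 2*b^3"
  using assms by (intro add_mono power_mono mult_left_mono) auto

lemma rr_exists: "\<exists>r::real. 0 < r \<and> r < 1 \<and> r^4 + 2*r^3 = 1"
proof -
  have "\<exists>x\<ge>0. x \<le> 1 \<and> x^4 + 2*x^3 = (1::real)"
    by (rule IVT) (auto intro!: continuous_intros)
  then obtain x :: real where x: "0 \<le> x" "x \<le> 1" "x^4 + 2*x^3 = 1" by blast
  then have "x \<noteq> 0" "x \<noteq> 1" by auto
  with x show ?thesis by (intro exI[of _ x]) auto
qed

definition rr :: real where "rr = (SOME r::real. 0 < r \<and> r < 1 \<and> r^4 + 2*r^3 = 1)"

lemma rr_props: "0 < rr" "rr < 1" "rr^4 + 2*rr^3 = 1"
  using someI_ex[OF rr_exists] unfolding rr_def[symmetric] by auto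

lemma rr_lo: "71667274/100000000 < rr"
proof (rule ccontr)
  assume "\<not> ?thesis"
  then have "rr^4 + 2*rr^3 \<le> (71667274/100000000)^4 + 2*(71667274/100000000::real)^3"
    using rr_props by (intro fpoly_mono) auto
  then show False using rr_props by (simp add: power_divide)
qed

lemma rr_hi: "rr < 71667275/100000000"
proof (rule ccontr)
  assume "\<not> ?thesis"
  then have "(71667275/100000000)^4 + 2*(71667275/100000000::real)^3 \<le> rr^4 + 2*rr^3"
    using rr_props by (intro fpoly_mono) auto
  then show False using rr_props by (simp add: power_divide)
qed

definition Cap :: real where "Cap = - 2 * log 2 rr"

lemma gibbs_term:
  fixes p a :: real
  assumes "0 \<le> p" "0 < a"
  shows "- p * log 2 p \<le> - p * log 2 a + (a - p) / ln 2"
proof (cases "p = 0")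
  case True then show ?thesis using assms by simp
next
  case False
  then have p: "p > 0" using assms by simp
  have "ln (a / p) \<le> a / p - 1" using p assms by (intro ln_le_minus_one) simp
  then have "p * ln (a / p) \<le> p * (a / p - 1)" using p by (intro mult_left_mono) auto
  also have "\<dots> = a - p" using p by (simp add: field_simps)
  finally have *: "p * (ln a - ln p) \<le> a - p" using p assms by (simp add: ln_div)
  have "- p * log 2 p - (- p * log 2 a) = p * (ln a - ln p) / ln 2"
    by (simp add: log_def field_simps)
  also have "\<dots> \<le> (a - p) / ln 2" using * by (simp add: divide_right_mono)
  finally show ?thesis by simp
qed

lemma log_rr4: "log 2 (rr^4) = 4 * log 2 rr"
  using rr_props by (simp add: log_nat_power)

lemma log_2rr3: "log 2 (2 * rr^3) = 1 + 3 * log 2 rr"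
  using rr_props by (simp add: log_mult log_nat_power)

lemma one_minus_p: "1 - rr^4 = 2 * rr^3"
  using rr_props by simp

lemma rate_le:
  assumes "0 \<le> p" "p \<le> 1"
  shows "ising3_rate p \<le> Cap"
proof -
  have a: "0 < rr^4" "0 < 2*rr^3" using rr_props by auto
  have g1: "- p * log 2 p \<le> - p * log 2 (rr^4) + (rr^4 - p) / ln 2"
    using gibbs_term[OF assms(1) a(1)] .
  have g2: "- (1-p) * log 2 (1-p) \<le> - (1-p) * log 2 (2*rr^3) + (2*rr^3 - (1-p)) / ln 2"
    using gibbs_term[of "1-p" "2*rr^3"] assms a by simp
  have "(rr^4 - p) / ln 2 + (2*rr^3 - (1-p)) / ln 2 = (rr^4 + 2*rr^3 - 1) / ln 2"
    by (simp add: field_simps)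
  also have "\<dots> = 0" using rr_props by simp
  finally have z: "(rr^4 - p) / ln 2 + (2*rr^3 - (1-p)) / ln 2 = 0" .
  have "H2 p + 1 - p \<le> - log 2 rr * (p + 3)"
    using g1 g2 z unfolding H2_def log_rr4 log_2rr3 by (simp add: algebra_simps)
  then have "2 * (H2 p + 1 - p) \<le> Cap * (p + 3)"
    unfolding Cap_def by (simp add: algebra_simps)
  then show ?thesis unfolding ising3_rate_def using assms by (simp add: divide_le_eq mult.commute)
qed

lemma rate_at: "ising3_rate (rr^4) = Cap"
proof -
  have H: "H2 (rr^4) = - (rr^4) * (4 * log 2 rr) - (2*rr^3) * (1 + 3 * log 2 rr)"
    unfolding H2_def one_minus_p log_rr4 log_2rr3 by simp
  have e1: "log 2 rr * rr^4 + 2*(log 2 rr * rr^3) = log 2 rr"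
    using rr_props(3) by (metis distrib_left mult.left_commute mult_1_right)
  have "2 * (H2 (rr^4) + 1 - rr^4) = Cap * (rr^4 + 3)"
    using H e1 rr_props(3) unfolding Cap_def one_minus_p[symmetric]
    by (simp add: algebra_simps)
  moreover have "rr^4 + 3 > 0" using rr_props by (simp add: add_pos_pos)
  ultimately show ?thesis unfolding ising3_rate_def by (simp add: field_simps)
qed

lemma rr4_bound: "\<bar>rr^4 - 0.263805\<bar> \<le> 0.0000005"
proof -
  have "(71667274/100000000::real)^4 \<le> rr^4" using rr_lo by (intro power_mono) auto
  moreover have "rr^4 \<le> (71667275/100000000::real)^4" using rr_hi rr_props by (intro power_mono) auto
  ultimately show ?thesis by (simp add: abs_le_iff power_divide)
qed

lemma ln2_bounds: "ln (2::real) \<in> {0.693147180..0.693147181}"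
proof -
  have "ln (2::real) \<in> {(\<Sum>k<12. 2*(1/3)^(2*k+1) / of_nat (2*k+1))..
         (\<Sum>k<12. 2*(1/3)^(2*k+1) / of_nat (2*k+1)) + 2*((1/3)^(2*12+1) / (1 - (1/3)^2) / of_nat (2*12+1))}"
    using ln_approx_bounds[of 2 12] by (simp add: numeral_eq_Suc)
  then show ?thesis apply (simp add: numeral_eq_Suc lessThan_Suc atLeastAtMost_iff) done
qed

lemma lnA: "0.333135958 \<le> ln (100000000/71667275::real)"
proof -
  have "ln (100000000/71667275::real) \<in> {(\<Sum>k<6. 2*((100000000/71667275 - 1)/(100000000/71667275 + 1))^(2*k+1) / of_nat (2*k+1))..
    (\<Sum>k<6. 2*((100000000/71667275 - 1)/(100000000/71667275 + 1))^(2*k+1) / of_nat (2*k+1))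
     + 2*(((100000000/71667275 - 1)/(100000000/71667275 + 1))^(2*6+1) / (1 - ((100000000/71667275 - 1)/(100000000/71667275 + 1))^2) / of_nat (2*6+1))}"
    using ln_approx_bounds[of "100000000/71667275::real" 6] by simp
  then show ?thesis by (simp add: numeral_eq_Suc lessThan_Suc atLeastAtMost_iff)
qed

lemma lnB: "ln (100000000/71667274::real) \<le> 0.333135973"
proof -
  have "ln (100000000/71667274::real) \<in> {(\<Sum>k<6. 2*((100000000/71667274 - 1)/(100000000/71667274 + 1))^(2*k+1) / of_nat (2*k+1))..
    (\<Sum>k<6. 2*((100000000/71667274 - 1)/(100000000/71667274 + 1))^(2*k+1) / of_nat (2*k+1))
     + 2*(((100000000/71667274 - 1)/(100000000/71667274 + 1))^(2*6+1) / (1 - ((100000000/71667274 - 1)/(100000000/71667274 + 1))^2) / of_nat (2*6+1))}"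
    using ln_approx_bounds[of "100000000/71667274::real" 6] by simp
  then show ?thesis by (simp add: numeral_eq_Suc lessThan_Suc atLeastAtMost_iff)
qed

lemma Cap_ln: "Cap = 2 * ln (1/rr) / ln 2"
  using rr_props by (simp add: Cap_def log_def ln_div)

lemma Cap_bound: "\<bar>Cap - 0.961227\<bar> \<le> 0.0000005"
proof -
  have r: "0 < rr" using rr_props by simp
  have "ln (100000000/71667275::real) \<le> ln (1/rr)"
    using rr_hi r by (subst ln_le_cancel_iff) (auto simp: field_simps)
  with lnA have l1: "0.333135958 \<le> ln (1/rr)" by linarith
  have "ln (1/rr) \<le> ln (100000000/71667274::real)"
    using rr_lo r by (subst ln_le_cancel_iff) (auto simp: field_simps)
  with lnB have l2: "ln (1/rr) \<le> 0.333135973" by linarith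
  have l3: "0.693147180 \<le> ln (2::real)" "ln (2::real) \<le> 0.693147181" using ln2_bounds by auto
  have "2 * 0.333135958 / 0.693147181 \<le> 2 * ln (1/rr) / ln 2"
    using l1 l3 by (intro frac_le) auto
  moreover have "2 * ln (1/rr) / ln 2 \<le> 2 * 0.333135973 / 0.693147180"
    using l2 l3 by (intro frac_le) auto
  ultimately show ?thesis unfolding Cap_ln by (simp add: abs_le_iff)
qed


definition lr :: real where "lr = log 2 rr"
definition lq :: real where "lq = log 2 (1 + rr^4)"

definition qstep :: "bool \<times> nat \<Rightarrow> nat \<Rightarrow> bool \<times> nat" where
  "qstep q y = (\<not> fst q \<and> y = snd q, y)"

definition qnode :: "nat \<Rightarrow> nat list \<Rightarrow> bool \<times> nat" where
  "qnode s0 ys = foldl qstep (False, s0) ys"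

definition Qs :: "bool \<times> nat \<Rightarrow> nat \<Rightarrow> real" where
  "Qs q y = (if \<not> fst q then (if y = snd q then (1 + rr^4)/2 else rr^3/2)
             else (if y = snd q then 2*rr^4/(1 + rr^4) else rr^3/(1 + rr^4)))"

definition Qprob :: "nat \<Rightarrow> nat list \<Rightarrow> real" where
  "Qprob s0 ys = (\<Prod>t<length ys. Qs (qnode s0 (take t ys)) (ys ! t))"

definition A1 :: real where "A1 = 1 - lr"
definition B0 :: real where "B0 = lq - 1 - 2*lr"
definition B1 :: real where "B1 = lq - lr"

definition phi :: "bool \<times> nat \<Rightarrow> nat \<Rightarrow> real" where
  "phi q s = (if s = snd q then (if fst q then B0 else 0) else (if fst q then B1 else A1))"

definition gval :: "bool \<times> nat \<Rightarrow> nat \<Rightarrow> nat \<Rightarrow> nat \<Rightarrow> real" where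
  "gval q s x y = log 2 (ising_W s x y) - log 2 (Qs q y) + phi (qstep q y) x - phi q s - Cap"

lemma qnode_snoc: "qnode s0 (ys @ [y]) = qstep (qnode s0 ys) y"
  by (simp add: qnode_def)

lemma qnode_Nil[simp]: "qnode s0 [] = (False, s0)" by (simp add: qnode_def)

lemma qnode_alph: "s0 \<in> alph \<Longrightarrow> set ys \<subseteq> alph \<Longrightarrow> snd (qnode s0 ys) \<in> alph"
  by (induction ys rule: rev_induct) (auto simp: qnode_snoc qstep_def)

lemma Qprob_Nil[simp]: "Qprob s0 [] = 1" by (simp add: Qprob_def)

lemma Qprob_snoc: "Qprob s0 (ys @ [y]) = Qprob s0 ys * Qs (qnode s0 ys) y"
proof -
  have "Qprob s0 (ys @ [y]) = (\<Prod>t<Suc (length ys). Qs (qnode s0 (take t (ys@[y]))) ((ys@[y]) ! t))"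
    by (simp add: Qprob_def)
  also have "\<dots> = (\<Prod>t<length ys. Qs (qnode s0 (take t (ys@[y]))) ((ys@[y]) ! t)) * Qs (qnode s0 ys) y"
    by simp
  also have "(\<Prod>t<length ys. Qs (qnode s0 (take t (ys@[y]))) ((ys@[y]) ! t)) = Qprob s0 ys"
    unfolding Qprob_def by (rule prod.cong) (auto simp: nth_append)
  finally show ?thesis .
qed

lemma rr3_pos: "rr^3 > 0" using rr_props by simp
lemma rr4_pos: "rr^4 > 0" using rr_props by simp

lemma onep_pos[simp]: "0 < 1 + rr^4" using rr4_pos by linarith
lemma onep_ne[simp]: "1 + rr^4 \<noteq> 0" using onep_pos by linarith

lemma Qs_pos: "Qs q y > 0"
proof -
  show ?thesis using rr3_pos rr4_pos unfolding Qs_def by (auto intro!: divide_pos_pos mult_pos_pos)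
qed

lemma Qprob_pos: "Qprob s0 ys > 0"
  unfolding Qprob_def by (intro prod_pos) (simp add: Qs_pos)

lemma Qs_sum: "l \<in> alph \<Longrightarrow> (\<Sum>y\<in>alph. Qs (b, l) y) = 1"
proof -
  assume l: "l \<in> alph"
  have *: "(\<Sum>y\<in>alph. Qs (b, l) y) = Qs (b,l) l + 2 * (if \<not> b then rr^3/2 else rr^3/(1+rr^4))"
    using l unfolding sum_alph by (auto simp: alph_def Qs_def)
  have p: "1 + rr^4 > 0" by simp
  show ?thesis
  proof (cases b)
    case True
    have "Qs (b,l) l + 2 * (if \<not> b then rr^3/2 else rr^3/(1+rr^4)) = 2*rr^4/(1 + rr^4) + 2 * rr^3/(1+rr^4)"
      using True by (simp add: Qs_def)
    also have "\<dots> = (2*rr^4 + 2*rr^3)/(1+rr^4)"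
      by (simp add: add_divide_distrib)
    also have "2*rr^4 + 2*rr^3 = 1 + rr^4" using rr_props(3) by simp
    finally show ?thesis using * p by simp
  next
    case False
    then show ?thesis using * rr_props(3) by (simp add: Qs_def field_simps)
  qed
qed

lemma Qprob_sum: "s0 \<in> alph \<Longrightarrow> (\<Sum>ys\<in>out_seqs n. Qprob s0 ys) = 1"
proof (induction n)
  case 0 then show ?case by (simp add: out_seqs_0)
next
  case (Suc n)
  have "(\<Sum>ys\<in>out_seqs (Suc n). Qprob s0 ys) = (\<Sum>ys\<in>out_seqs n. Qprob s0 ys * (\<Sum>y\<in>alph. Qs (qnode s0 ys) y))"
    by (simp add: sum_out_seqs_Suc Qprob_snoc sum_distrib_left)
  also have "\<dots> = (\<Sum>ys\<in>out_seqs n. Qprob s0 ys)"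
  proof (rule sum.cong)
    fix ys assume "ys \<in> out_seqs n"
    then have "snd (qnode s0 ys) \<in> alph" using Suc.prems by (intro qnode_alph) (auto simp: out_seqs_def)
    then show "Qprob s0 ys * (\<Sum>y\<in>alph. Qs (qnode s0 ys) y) = Qprob s0 ys"
      using Qs_sum[of "snd (qnode s0 ys)" "fst (qnode s0 ys)"] by simp
  qed simp
  finally show ?case using Suc by simp
qed

lemma lr_bounds: "-1 < lr" "lr < 0"
proof -
  have "1/2 < rr" using rr_lo by simp
  then have "log 2 (1/2) < log 2 rr" using rr_props by (subst log_less_cancel_iff) auto
  then show "-1 < lr" by (simp add: lr_def log_divide)
  show "lr < 0" using rr_props by (simp add: lr_def)
qed

lemma Cap_lr: "Cap = -2 * lr" by (simp add: Cap_def lr_def)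

lemma log_facts:
  "log 2 (1/2 :: real) = -1"
  "log 2 ((1 + rr^4)/2) = lq - 1"
  "log 2 (rr^3/2) = 3*lr - 1"
  "log 2 (2*rr^4/(1 + rr^4)) = 1 + 4*lr - lq"
  "log 2 (rr^3/(1 + rr^4)) = 3*lr - lq"
  using rr_props rr3_pos rr4_pos add_pos_pos[OF zero_less_one rr4_pos]
  by (simp_all add: lr_def lq_def log_divide log_mult log_nat_power)

lemma bellman:
  assumes "s \<in> alph" "x \<in> alph"
  shows "(\<Sum>y\<in>alph. ising_W s x y * gval (b, l) s x y) \<le> 0"
proof -
  have e: "(\<Sum>y\<in>alph. ising_W s x y * gval (b, l) s x y) = gval (b,l) s x x / 2 + gval (b,l) s x s / 2"
    using W_sum[OF assms] .
  have lb: "-1 < lr" using lr_bounds by simp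
  show ?thesis unfolding e
    apply (cases b; cases "s = l"; cases "x = l"; cases "x = s")
    apply (simp_all add: gval_def ising_W_def Qs_def phi_def qstep_def log_facts Cap_lr A1_def B0_def B1_def)
    using lb by auto
qed


definition QB :: real where
  "QB = \<bar>lq - 1\<bar> + \<bar>3*lr - 1\<bar> + \<bar>1 + 4*lr - lq\<bar> + \<bar>3*lr - lq\<bar>"
definition PB :: real where "PB = \<bar>A1\<bar> + \<bar>B0\<bar> + \<bar>B1\<bar>"
definition Gb :: real where "Gb = 1 + QB + 2 * PB + \<bar>Cap\<bar>"

lemma log0: "log 2 (0::real) = 0" by (simp add: log_def)

lemma log_W_bound: "\<bar>log 2 (ising_W s x y)\<bar> \<le> 1"
proof -
  have "ising_W s x y = 0 \<or> ising_W s x y = 1/2 \<or> ising_W s x y = 1" by (auto simp: ising_W_def)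
  then show ?thesis
  proof (elim disjE)
    assume h: "ising_W s x y = 1/2" show ?thesis by (simp only: h log_facts(1))
  qed (simp_all add: log0)
qed

lemma log_Qs_bound: "\<bar>log 2 (Qs q y)\<bar> \<le> QB"
  unfolding QB_def Qs_def by (auto simp: log_facts)

lemma phi_bound: "\<bar>phi q s\<bar> \<le> PB"
  unfolding PB_def phi_def by auto

lemma gval_bound: "\<bar>gval q s x y\<bar> \<le> Gb"
proof -
  have "\<bar>gval q s x y\<bar> \<le> \<bar>log 2 (ising_W s x y)\<bar> + \<bar>log 2 (Qs q y)\<bar> + \<bar>phi (qstep q y) x\<bar> + \<bar>phi q s\<bar> + \<bar>Cap\<bar>"
    unfolding gval_def by linarith
  also have "\<dots> \<le> 1 + QB + PB + PB + \<bar>Cap\<bar>"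
    using log_W_bound[of s x y] log_Qs_bound[of q y] phi_bound[of "qstep q y" x] phi_bound[of q s] by linarith
  finally show ?thesis unfolding Gb_def by linarith
qed

lemma Gb_nonneg: "0 \<le> Gb" using gval_bound[of "(False,0)" 0 0 0] by linarith

context
  fixes e :: fb_encoder and s0 :: nat and m :: nat
  assumes ve: "valid_encoder e" and s0: "s0 \<in> alph"
begin

definition "Gf pre y = gval (qnode s0 pre) (stt e s0 m pre) (e m pre) y"
definition "Eg pre = (\<Sum>y\<in>alph. ising_W (stt e s0 m pre) (e m pre) y * Gf pre y)"
definition "Dc pre y = Gf pre y - Eg pre"

lemma sx: "stt e s0 m pre \<in> alph" "e m pre \<in> alph"
  using ve s0 by (auto simp: stt_alph valid_encoder_def)

lemma Eg_le0: "Eg pre \<le> 0"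
  unfolding Eg_def Gf_def
  using bellman[OF sx, where b="fst (qnode s0 pre)" and l="snd (qnode s0 pre)"] by simp

lemma Eg_bound: "\<bar>Eg pre\<bar> \<le> Gb"
proof -
  have "\<bar>Eg pre\<bar> \<le> (\<Sum>y\<in>alph. \<bar>ising_W (stt e s0 m pre) (e m pre) y * Gf pre y\<bar>)"
    unfolding Eg_def by (rule sum_abs)
  also have "\<dots> \<le> (\<Sum>y\<in>alph. ising_W (stt e s0 m pre) (e m pre) y * Gb)"
    by (rule sum_mono) (simp add: abs_mult ising_W_nonneg Gf_def gval_bound mult_left_mono)
  also have "\<dots> = Gb" using W_sum1[OF sx] by (simp add: sum_distrib_right[symmetric])
  finally show ?thesis .
qed

lemma Dc_bound: "\<bar>Dc pre y\<bar> \<le> 2 * Gb"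
  using Eg_bound[of pre] gval_bound[of "qnode s0 pre" "stt e s0 m pre" "e m pre" y] unfolding Dc_def Gf_def
  by (auto simp: abs_le_iff)

lemma Dc_mart: "(\<Sum>y\<in>alph. ising_W (stt e s0 m pre) (e m pre) y * Dc pre y) = 0"
proof -
  let ?W = "ising_W (stt e s0 m pre) (e m pre)"
  have "(\<Sum>y\<in>alph. ?W y * Dc pre y) = (\<Sum>y\<in>alph. ?W y * Gf pre y) - (\<Sum>y\<in>alph. ?W y * Eg pre)"
    unfolding Dc_def by (simp add: right_diff_distrib sum_subtractf)
  also have "(\<Sum>y\<in>alph. ?W y * Eg pre) = (\<Sum>y\<in>alph. ?W y) * Eg pre"
    by (simp add: sum_distrib_right)
  also have "(\<Sum>y\<in>alph. ?W y * Gf pre y) = Eg pre" by (simp add: Eg_def)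
  finally show ?thesis using W_sum1[OF sx] by simp
qed

lemma Ssum_Dc: "Ssum Gf ys \<le> Ssum Dc ys"
proof -
  have "Ssum Dc ys = Ssum Gf ys - (\<Sum>t<length ys. Eg (take t ys))"
    unfolding Ssum_def Dc_def by (simp add: sum_subtractf)
  moreover have "(\<Sum>t<length ys. Eg (take t ys)) \<le> 0"
    by (rule sum_nonpos) (simp add: Eg_le0)
  ultimately show ?thesis by linarith
qed

lemma stt_snoc: "stt e s0 m (ys @ [y]) = e m ys"
  by (simp add: stt_def)

lemma info_id:
  "out_prob e s0 m ys > 0 \<Longrightarrow>
    log 2 (out_prob e s0 m ys) - log 2 (Qprob s0 ys)
      = Ssum Gf ys + real (length ys) * Cap - phi (qnode s0 ys) (stt e s0 m ys)"
proof (induction ys rule: rev_induct)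
  case Nil then show ?case by (simp add: stt_def phi_def)
next
  case (snoc y ys)
  let ?W = "ising_W (stt e s0 m ys) (e m ys) y"
  have P: "out_prob e s0 m (ys @ [y]) = out_prob e s0 m ys * ?W" by (rule out_prob_snoc)
  have nn: "out_prob e s0 m ys \<ge> 0" "?W \<ge> 0" by (simp_all add: out_prob_nonneg ising_W_nonneg)
  with snoc.prems P have pos: "out_prob e s0 m ys > 0" "?W > 0"
    by (auto simp: zero_less_mult_iff)
  have l1: "log 2 (out_prob e s0 m (ys @ [y])) = log 2 (out_prob e s0 m ys) + log 2 ?W"
    using P pos by (simp add: log_mult_pos)
  have l2: "log 2 (Qprob s0 (ys @ [y])) = log 2 (Qprob s0 ys) + log 2 (Qs (qnode s0 ys) y)"
    using Qprob_pos Qs_pos by (simp add: Qprob_snoc log_mult_pos)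
  have G: "Gf ys y = log 2 ?W - log 2 (Qs (qnode s0 ys) y) + phi (qnode s0 (ys@[y])) (e m ys)
            - phi (qnode s0 ys) (stt e s0 m ys) - Cap"
    by (simp add: Gf_def gval_def qnode_snoc)
  show ?case using snoc.IH[OF pos(1)] l1 l2 G
    by (simp add: Ssum_snoc stt_snoc algebra_simps)
qed

lemma tail_bound:
  assumes d: "\<delta> > 0" and n: "real n * \<delta> \<ge> 2 * PB" "n > 0"
  shows "(\<Sum>ys\<in>out_seqs n. if out_prob e s0 m ys > 2 powr (real n * (Cap + \<delta>)) * Qprob s0 ys
            then out_prob e s0 m ys else 0) \<le> 16 * Gb\<^sup>2 / (real n * \<delta>\<^sup>2)"
proof -
  have a: "real n * \<delta> / 2 > 0" using d n by simp
  have "(\<Sum>ys\<in>out_seqs n. if out_prob e s0 m ys > 2 powr (real n * (Cap + \<delta>)) * Qprob s0 ys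
            then out_prob e s0 m ys else 0) \<le> real n * (2 * Gb)\<^sup>2 / (real n * \<delta> / 2)\<^sup>2"
  proof (rule chebyshev[OF ve s0 _ _ a])
    show "\<bar>Dc ys y\<bar> \<le> 2 * Gb" for ys y by (rule Dc_bound)
    show "(\<Sum>y\<in>alph. ising_W (stt e s0 m ys) (e m ys) y * Dc ys y) = 0" for ys by (rule Dc_mart)
  next
    fix ys assume ys: "ys \<in> out_seqs n" and P: "out_prob e s0 m ys > 0"
      and E: "out_prob e s0 m ys > 2 powr (real n * (Cap + \<delta>)) * Qprob s0 ys"
    have len: "length ys = n" using ys by (simp add: out_seqs_def)
    have Q: "Qprob s0 ys > 0" by (rule Qprob_pos)
    have "log 2 (2 powr (real n * (Cap + \<delta>)) * Qprob s0 ys) < log 2 (out_prob e s0 m ys)"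
      using E Q P by (subst log_less_cancel_iff) auto
    then have "real n * (Cap + \<delta>) + log 2 (Qprob s0 ys) < log 2 (out_prob e s0 m ys)"
      using Q by (simp add: log_mult_pos)
    then have "real n * (Cap + \<delta>) < Ssum Gf ys + real n * Cap - phi (qnode s0 ys) (stt e s0 m ys)"
    proof -
      have "log 2 (out_prob e s0 m ys) - log 2 (Qprob s0 ys) = Ssum Gf ys + real n * Cap - phi (qnode s0 ys) (stt e s0 m ys)"
        using info_id[OF P] len by simp
      with \<open>real n * (Cap + \<delta>) + log 2 (Qprob s0 ys) < log 2 (out_prob e s0 m ys)\<close> show ?thesis by linarith
    qed
    then have "real n * \<delta> - PB < Ssum Gf ys"
      using phi_bound[of "qnode s0 ys" "stt e s0 m ys"] by (simp add: algebra_simps)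
    then have "real n * \<delta> / 2 \<le> Ssum Dc ys" using Ssum_Dc[of ys] n by linarith
    then show "real n * \<delta> / 2 \<le> \<bar>Ssum Dc ys\<bar>" by linarith
  qed
  also have "real n * (2 * Gb)\<^sup>2 / (real n * \<delta> / 2)\<^sup>2 = 16 * Gb\<^sup>2 / (real n * \<delta>\<^sup>2)"
    using n d by (simp add: field_simps power2_eq_square)
  finally show ?thesis .
qed

end


lemma converse:
  assumes s0: "s0 \<in> alph" and ach: "achievable s0 R"
  shows "R \<le> Cap"
proof (rule ccontr)
  assume "\<not> R \<le> Cap"
  define \<delta> where "\<delta> = (R - Cap) / 2"
  have d: "\<delta> > 0" using \<open>\<not> R \<le> Cap\<close> by (simp add: \<delta>_def)
  obtain N where N: "\<forall>n\<ge>N. \<exists>M e d. M \<ge> 1 \<and> real M \<ge> 2 powr (real n * R) \<and>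
        valid_encoder e \<and> avg_err s0 n M e d \<le> 1/4"
    using ach unfolding achievable_def by (meson zero_less_divide_1_iff zero_less_numeral)
  define K where "K = 2 * PB / \<delta> + 64 * Gb\<^sup>2 / \<delta>\<^sup>2 + 1 / \<delta> + 1"
  obtain n0 :: nat where n0: "K < real n0" using reals_Archimedean2 by blast
  define n where "n = max N n0"
  have nN: "n \<ge> N" and nK: "K < real n" using n0 by (auto simp: n_def)
  have Kpos: "2 * PB / \<delta> \<ge> 0" "64 * Gb\<^sup>2 / \<delta>\<^sup>2 \<ge> 0" "1 / \<delta> > 0"
    using d PB_def by (auto intro!: divide_nonneg_pos)
  have "real n > 0" using nK Kpos unfolding K_def by linarith
  then have npos: "n > 0" by simp
  have n1: "real n * \<delta> \<ge> 2 * PB"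
  proof -
    have "2 * PB / \<delta> \<le> real n" using nK Kpos unfolding K_def by linarith
    then show ?thesis using d by (simp add: divide_le_eq mult.commute)
  qed
  have n2: "real n * \<delta> \<ge> 1"
  proof -
    have "1 / \<delta> \<le> real n" using nK Kpos unfolding K_def by linarith
    then show ?thesis using d by (simp add: divide_le_eq mult.commute)
  qed
  have n3: "16 * Gb\<^sup>2 / (real n * \<delta>\<^sup>2) < 1/4"
  proof -
    have "64 * Gb\<^sup>2 / \<delta>\<^sup>2 < real n" using nK Kpos unfolding K_def by linarith
    then have "64 * Gb\<^sup>2 < real n * \<delta>\<^sup>2" using d by (simp add: divide_less_eq)
    then show ?thesis using d npos by (simp add: divide_less_eq)
  qed
  obtain M e dec where M: "M \<ge> 1" "real M \<ge> 2 powr (real n * R)"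
    and ve: "valid_encoder e" and err: "avg_err s0 n M e dec \<le> 1/4"
    using N nN by blast
  let ?P = "\<lambda>m ys. out_prob e s0 m ys"
  let ?Q = "Qprob s0"
  define \<gamma> where "\<gamma> = real n * (Cap + \<delta>)"
  define \<tau> where "\<tau> = 16 * Gb\<^sup>2 / (real n * \<delta>\<^sup>2)"
  define S where "S m = (\<Sum>ys\<in>out_seqs n. if dec ys = m then ?P m ys else 0)" for m
  have fin: "finite (out_seqs n)" by (rule finite_out_seqs)
  have errS: "(\<Sum>ys\<in>out_seqs n. if dec ys = m then 0 else ?P m ys) = 1 - S m" for m
  proof -
    have "(\<Sum>ys\<in>out_seqs n. if dec ys = m then 0 else ?P m ys) + S m = (\<Sum>ys\<in>out_seqs n. ?P m ys)"
      unfolding S_def by (simp add: sum.distrib[symmetric] if_distrib cong: if_cong)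
    then show ?thesis using out_prob_sum1[OF ve s0] by simp
  qed
  have Sb: "S m \<le> 2 powr \<gamma> * (\<Sum>ys\<in>out_seqs n. if dec ys = m then ?Q ys else 0) + \<tau>" for m
  proof -
    have "S m \<le> (\<Sum>ys\<in>out_seqs n. 2 powr \<gamma> * (if dec ys = m then ?Q ys else 0)
                  + (if ?P m ys > 2 powr \<gamma> * ?Q ys then ?P m ys else 0))"
      unfolding S_def
    proof (rule sum_mono)
      fix ys
      have q: "?Q ys > 0" by (rule Qprob_pos)
      have "?P m ys \<ge> 0" by (rule out_prob_nonneg)
      then show "(if dec ys = m then ?P m ys else 0) \<le> 2 powr \<gamma> * (if dec ys = m then ?Q ys else 0)
                  + (if ?P m ys > 2 powr \<gamma> * ?Q ys then ?P m ys else 0)"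
        using q by (auto simp: not_less)
    qed
    also have "\<dots> = 2 powr \<gamma> * (\<Sum>ys\<in>out_seqs n. if dec ys = m then ?Q ys else 0)
        + (\<Sum>ys\<in>out_seqs n. if ?P m ys > 2 powr \<gamma> * ?Q ys then ?P m ys else 0)"
      by (simp add: sum.distrib sum_distrib_left)
    also have "(\<Sum>ys\<in>out_seqs n. if ?P m ys > 2 powr \<gamma> * ?Q ys then ?P m ys else 0) \<le> \<tau>"
      unfolding \<gamma>_def \<tau>_def by (rule tail_bound[OF ve s0 d n1 npos])
    finally show ?thesis by simp
  qed
  have sumQ: "(\<Sum>m<M. \<Sum>ys\<in>out_seqs n. if dec ys = m then ?Q ys else 0) \<le> 1"
  proof -
    have "(\<Sum>m<M. \<Sum>ys\<in>out_seqs n. if dec ys = m then ?Q ys else 0)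
        = (\<Sum>ys\<in>out_seqs n. \<Sum>m<M. if dec ys = m then ?Q ys else 0)"
      by (rule sum.swap)
    also have "\<dots> = (\<Sum>ys\<in>out_seqs n. if dec ys < M then ?Q ys else 0)"
      by (rule sum.cong) (simp_all add: sum.delta)
    also have "\<dots> \<le> (\<Sum>ys\<in>out_seqs n. ?Q ys)"
      by (rule sum_mono) (simp add: Qprob_pos less_imp_le)
    also have "\<dots> = 1" by (rule Qprob_sum[OF s0])
    finally show ?thesis .
  qed
  have "(\<Sum>m<M. S m) \<le> (\<Sum>m<M. 2 powr \<gamma> * (\<Sum>ys\<in>out_seqs n. if dec ys = m then ?Q ys else 0) + \<tau>)"
    by (rule sum_mono) (rule Sb)
  also have "\<dots> = 2 powr \<gamma> * (\<Sum>m<M. \<Sum>ys\<in>out_seqs n. if dec ys = m then ?Q ys else 0) + real M * \<tau>"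
    by (simp add: sum.distrib sum_distrib_left)
  also have "\<dots> \<le> 2 powr \<gamma> * 1 + real M * \<tau>"
    using sumQ by (intro add_right_mono mult_left_mono) auto
  finally have sumS: "(\<Sum>m<M. S m) \<le> 2 powr \<gamma> + real M * \<tau>" by simp
  have Mpos: "real M > 0" using M by simp
  have "avg_err s0 n M e dec = (1 / real M) * (\<Sum>m<M. 1 - S m)"
    unfolding avg_err_def using errS by simp
  also have "\<dots> = 1 - (\<Sum>m<M. S m) / real M"
    using Mpos by (simp add: sum_subtractf field_simps)
  finally have ae: "avg_err s0 n M e dec = 1 - (\<Sum>m<M. S m) / real M" .
  have "(\<Sum>m<M. S m) / real M \<le> (2 powr \<gamma> + real M * \<tau>) / real M"
    using sumS Mpos by (intro divide_right_mono) auto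
  also have "\<dots> = 2 powr \<gamma> / real M + \<tau>"
    using Mpos by (simp add: add_divide_distrib)
  also have "2 powr \<gamma> / real M \<le> 2 powr \<gamma> / 2 powr (real n * R)"
    using M by (intro divide_left_mono) auto
  also have "2 powr \<gamma> / 2 powr (real n * R) = 2 powr (- (real n * \<delta>))"
  proof -
    have "real n * (Cap + \<delta>) - real n * R = - (real n * \<delta>)" by (simp add: \<delta>_def algebra_simps)
    then show ?thesis unfolding \<gamma>_def by (simp add: powr_diff[symmetric])
  qed
  also have "\<dots> \<le> 2 powr (-1)"
    using n2 by (intro powr_mono) auto
  finally have "(\<Sum>m<M. S m) / real M \<le> 1/2 + \<tau>" by (simp add: powr_minus)
  moreover have "\<tau> < 1/4" using n3 by (simp add: \<tau>_def)
  ultimately have "avg_err s0 n M e dec > 1/4" using ae by linarith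
  with err show False by linarith
qed


definition cost :: "nat \<Rightarrow> nat" where "cost c = (if c = 0 then 4 else 3)"
definition costsum :: "nat list \<Rightarrow> nat" where "costsum cs = sum_list (map cost cs)"

lemma costsum_simps[simp]: "costsum [] = 0" "costsum (c # cs) = cost c + costsum cs"
  "costsum (cs @ ds) = costsum cs + costsum ds"
  by (simp_all add: costsum_def)

function mseqs :: "nat \<Rightarrow> nat list list" where
  "mseqs L = (if L < 3 then [[]] else
     (if 4 \<le> L then map ((#) 0) (mseqs (L - 4)) else []) @ map ((#) 1) (mseqs (L - 3)) @ map ((#) 2) (mseqs (L - 3)))"
  by auto
termination by (relation "Wellfounded.measure id") auto

declare mseqs.simps[simp del]

lemma mseqs_eq: "\<not> L < 3 \<Longrightarrow> mseqs L = (if 4 \<le> L then map ((#) 0) (mseqs (L - 4)) else []) @ map ((#) 1) (mseqs (L - 3)) @ map ((#) 2) (mseqs (L - 3))"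
  by (subst mseqs.simps) simp

lemma mseqs_lt3: "L < 3 \<Longrightarrow> mseqs L = [[]]"
  by (subst mseqs.simps) simp

lemma mseqs_cases:
  assumes "cs \<in> set (mseqs L)"
  shows "(L < 3 \<and> cs = []) \<or> (\<exists>c cs'. cs = c # cs' \<and> c < 3 \<and> cost c \<le> L \<and> cs' \<in> set (mseqs (L - cost c)))"
proof (cases "L < 3")
  case True then show ?thesis using assms by (simp add: mseqs_lt3)
next
  case False
  have "(4 \<le> L \<and> cs \<in> (#) 0 ` set (mseqs (L - 4))) \<or> cs \<in> (#) 1 ` set (mseqs (L - 3)) \<or> cs \<in> (#) 2 ` set (mseqs (L - 3))"
    using assms unfolding mseqs_eq[OF False] by (auto split: if_splits)
  then show ?thesis
  proof (elim disjE)
    assume "4 \<le> L \<and> cs \<in> (#) 0 ` set (mseqs (L - 4))"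
    then obtain x where "cs = 0 # x" "x \<in> set (mseqs (L - 4))" "4 \<le> L" by auto
    then show ?thesis by (intro disjI2 exI[of _ 0] exI[of _ x]) (simp add: cost_def)
  next
    assume "cs \<in> (#) 1 ` set (mseqs (L - 3))"
    then obtain x where "cs = 1 # x" "x \<in> set (mseqs (L - 3))" by auto
    then show ?thesis using False by (intro disjI2 exI[of _ 1] exI[of _ x]) (simp add: cost_def)
  next
    assume "cs \<in> (#) 2 ` set (mseqs (L - 3))"
    then obtain x where "cs = 2 # x" "x \<in> set (mseqs (L - 3))" by auto
    then show ?thesis using False by (intro disjI2 exI[of _ 2] exI[of _ x]) (simp add: cost_def)
  qed
qed

lemma mseqs_distinct: "distinct (mseqs L)"
proof (induction L rule: mseqs.induct)
  case (1 L)
  show ?case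
  proof (cases "L < 3")
    case True then show ?thesis by (simp add: mseqs_lt3)
  next
    case False
    then show ?thesis using 1 unfolding mseqs_eq[OF False] by (auto simp: distinct_map)
  qed
qed

lemma mseqs_elems: "cs \<in> set (mseqs L) \<Longrightarrow> (\<forall>c\<in>set cs. c < 3) \<and> costsum cs \<le> L"
proof (induction cs arbitrary: L)
  case Nil then show ?case by simp
next
  case (Cons c cs)
  have "c < 3" "cost c \<le> L" "cs \<in> set (mseqs (L - cost c))"
    using mseqs_cases[OF Cons.prems] by auto
  with Cons.IH[of "L - cost c"] show ?case by auto
qed

definition isprefix :: "nat list \<Rightarrow> nat list \<Rightarrow> bool" where
  "isprefix a b \<longleftrightarrow> take (length a) b = a"

lemma mseqs_prefix_free:
  "a \<in> set (mseqs L) \<Longrightarrow> b \<in> set (mseqs L) \<Longrightarrow> isprefix a b \<Longrightarrow> a = b"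
proof (induction a arbitrary: L b)
  case Nil
  show ?case
  proof (cases "L < 3")
    case True then show ?thesis using Nil by (simp add: mseqs_lt3)
  next
    case False
    then show ?thesis using mseqs_cases[OF Nil(1)] by simp
  qed
next
  case (Cons c a')
  from mseqs_cases[OF Cons.prems(1)] have a': "a' \<in> set (mseqs (L - cost c))" by auto
  from Cons.prems(3) obtain b' where b: "b = c # b'" "isprefix a' b'"
    by (cases b) (auto simp: isprefix_def)
  from mseqs_cases[OF Cons.prems(2)] b have b': "b' \<in> set (mseqs (L - cost c))" by auto
  from Cons.IH[OF a' b' b(2)] b show ?case by simp
qed

lemma mseqs_len: "real (length (mseqs L)) * rr^L \<ge> rr^4"
proof (induction L rule: mseqs.induct)
  case (1 L)
  have r: "0 < rr" "rr < 1" using rr_props by auto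
  show ?case
  proof (cases "L < 3")
    case True
    then have "rr^4 \<le> rr^L" using r by (intro power_decreasing) auto
    then show ?thesis using True by (simp add: mseqs.simps)
  next
    case False
    show ?thesis
    proof (cases "L = 3")
      case True
      have "mseqs 0 = [[]]" by (simp add: mseqs.simps)
      then have "length (mseqs 3) = 2" by (simp add: mseqs.simps)
      moreover have "rr^4 \<le> 2 * rr^3"
      proof -
        have "rr^4 \<le> rr^3" using r by (intro power_decreasing) auto
        moreover have "rr^3 > 0" using r by simp
        ultimately show ?thesis by linarith
      qed
      ultimately show ?thesis using True by simp
    next
      case L4: False
      then have IH0: "real (length (mseqs (L - 4))) * rr^(L-4) \<ge> rr^4"
        and IH1: "real (length (mseqs (L - 3))) * rr^(L-3) \<ge> rr^4"
        using 1 False by auto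
      have len: "length (mseqs L) = length (mseqs (L - 4)) + 2 * length (mseqs (L - 3))"
        using False L4 by (subst mseqs.simps) simp
      have p1: "rr^L = rr^(L-4) * rr^4" "rr^L = rr^(L-3) * rr^3"
        using False L4 by (simp_all add: power_add[symmetric])
      have "real (length (mseqs L)) * rr^L
          = (real (length (mseqs (L - 4))) * rr^(L-4)) * rr^4 + 2 * (real (length (mseqs (L - 3))) * rr^(L-3)) * rr^3"
        using len p1 by (simp add: algebra_simps)
      also have "\<dots> \<ge> rr^4 * rr^4 + 2 * rr^4 * rr^3"
        using IH0 IH1 r by (intro add_mono mult_right_mono mult_left_mono) auto
      finally have "real (length (mseqs L)) * rr^L \<ge> rr^4 * (rr^4 + 2 * rr^3)"
        by (simp add: algebra_simps)
      then show ?thesis using rr_props(3) by simp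
    qed
  qed
qed


definition pstep :: "bool \<times> nat \<times> nat list \<Rightarrow> nat \<Rightarrow> bool \<times> nat \<times> nat list" where
  "pstep st y = (case st of (ph, l, dn) \<Rightarrow>
     (if \<not> ph \<and> y = l then (True, l, dn) else (False, y, dn @ [(y + 3 - l) mod 3])))"

definition parse :: "nat \<Rightarrow> nat list \<Rightarrow> bool \<times> nat \<times> nat list" where
  "parse s0 ys = foldl pstep (False, s0, []) ys"

lemma parse_Nil[simp]: "parse s0 [] = (False, s0, [])" by (simp add: parse_def)
lemma parse_snoc: "parse s0 (ys @ [y]) = pstep (parse s0 ys) y" by (simp add: parse_def)

definition cyc :: "nat list \<Rightarrow> nat \<Rightarrow> nat" where
  "cyc cs i = (if i < length cs then cs ! i else 0)"

definition enc :: "nat \<Rightarrow> nat \<Rightarrow> fb_encoder" where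
  "enc s0 L m pre = (case parse s0 pre of (ph, l, dn) \<Rightarrow> (l + cyc (mseqs L ! m) (length dn)) mod 3)"

definition dec :: "nat \<Rightarrow> nat \<Rightarrow> decoder" where
  "dec s0 L ys = (LEAST i. i < length (mseqs L) \<and> isprefix (mseqs L ! i) (snd (snd (parse s0 ys))))"

definition Phi :: "nat list \<Rightarrow> bool \<times> nat \<times> nat list \<Rightarrow> nat" where
  "Phi cs st = (case st of (ph, l, dn) \<Rightarrow>
      costsum dn + (if ph then (if cyc cs (length dn) = 0 then 2 else 1) else 0))"

definition Dp :: "nat \<Rightarrow> nat list \<Rightarrow> nat list \<Rightarrow> nat \<Rightarrow> real" where
  "Dp s0 cs pre y = real (Phi cs (parse s0 (pre @ [y]))) - real (Phi cs (parse s0 pre)) - 2"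

lemma enc_valid: "valid_encoder (enc s0 L)"
  by (auto simp: valid_encoder_def enc_def alph_def split: prod.splits)

lemma three_cases: "l < (3::nat) \<Longrightarrow> l = 0 \<or> l = 1 \<or> l = 2" by arith
lemma ar1: "l < 3 \<Longrightarrow> c < (3::nat) \<Longrightarrow> (((l + c) mod 3) + 3 - l) mod 3 = c"
  by (drule three_cases, drule three_cases, auto)
lemma ar3: "l < 3 \<Longrightarrow> 0 < c \<Longrightarrow> c < (3::nat) \<Longrightarrow> (l + c) mod 3 \<noteq> l"
proof
  assume a: "l < 3" "0 < c" "c < 3" "(l + c) mod 3 = l"
  have "c = (((l + c) mod 3) + 3 - l) mod 3" using ar1[OF a(1) a(3)] by simp
  also have "\<dots> = 0" using a(4) by simp
  finally show False using a(2) by simp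
qed


lemma alph_lt3: "l \<in> alph \<longleftrightarrow> l < 3"
  by (auto simp: alph_def)

lemma W_pos: "ising_W s x y > 0 \<Longrightarrow> y = x \<or> y = s"
  by (auto simp: ising_W_def split: if_splits)

lemma Dp_bound: "\<bar>Dp s0 cs pre y\<bar> \<le> 2"
proof -
  obtain ph l dn where p: "parse s0 pre = (ph, l, dn)" by (metis prod_cases3)
  show ?thesis unfolding Dp_def parse_snoc p
    by (auto simp: pstep_def Phi_def cost_def)
qed

lemma Ssum_Dp: "Ssum (Dp s0 cs) ys = real (Phi cs (parse s0 ys)) - 2 * real (length ys)"
proof (induction ys rule: rev_induct)
  case Nil then show ?case by (simp add: Phi_def)
next
  case (snoc y ys) then show ?case by (simp add: Ssum_snoc Dp_def)
qed

context
  fixes s0 L m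
  assumes s0: "s0 \<in> alph" and mM: "m < length (mseqs L)"
begin

abbreviation "cs \<equiv> mseqs L ! m"

lemma cs_elems: "\<forall>c\<in>set cs. c < 3" "costsum cs \<le> L"
  using mseqs_elems[of cs L] mM by auto

lemma cyc_lt3: "cyc cs i < 3"
  using cs_elems(1) by (auto simp: cyc_def)

lemma invariant:
  "out_prob (enc s0 L) s0 m pre > 0 \<Longrightarrow> parse s0 pre = (ph, l, dn) \<Longrightarrow>
    l < 3 \<and> dn = map (cyc cs) [0..<length dn] \<and>
    stt (enc s0 L) s0 m pre = (if ph then (l + cyc cs (length dn)) mod 3 else l)"
proof (induction pre arbitrary: ph l dn rule: rev_induct)
  case Nil then show ?case using s0 by (auto simp: stt_def alph_lt3)
next
  case (snoc y pre)
  obtain ph0 l0 dn0 where p0: "parse s0 pre = (ph0, l0, dn0)" by (metis prod_cases3)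
  let ?s = "stt (enc s0 L) s0 m pre" and ?x = "enc s0 L m pre"
  have "out_prob (enc s0 L) s0 m (pre @ [y]) = out_prob (enc s0 L) s0 m pre * ising_W ?s ?x y"
    by (rule out_prob_snoc)
  with snoc.prems(1) have pos: "out_prob (enc s0 L) s0 m pre > 0" "ising_W ?s ?x y > 0"
    using out_prob_nonneg[of "enc s0 L" s0 m pre] ising_W_nonneg[of ?s ?x y]
    by (auto simp: zero_less_mult_iff)
  have IH: "l0 < 3" "dn0 = map (cyc cs) [0..<length dn0]"
      "?s = (if ph0 then (l0 + cyc cs (length dn0)) mod 3 else l0)"
    using snoc.IH[OF pos(1) p0] by auto
  have x: "?x = (l0 + cyc cs (length dn0)) mod 3" by (simp add: enc_def p0)
  have y: "y = ?x \<or> y = ?s" using W_pos[OF pos(2)] .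
  have st: "stt (enc s0 L) s0 m (pre @ [y]) = ?x" by (simp add: stt_def)
  have pn: "parse s0 (pre @ [y]) = pstep (ph0, l0, dn0) y" by (simp add: parse_snoc p0)
  have c3: "cyc cs (length dn0) < 3" by (rule cyc_lt3)
  have dn_ext: "dn0 @ [cyc cs (length dn0)] = map (cyc cs) [0..<length (dn0 @ [cyc cs (length dn0)])]"
    using IH(2) by (metis length_append_singleton map_append list.simps(8,9) upt_Suc_append le0 upt_Suc)
  show ?case
  proof (cases ph0)
    case True
    then have "y = ?x" using y IH(3) x by auto
    then have "parse s0 (pre @ [y]) = (False, ?x, dn0 @ [cyc cs (length dn0)])"
      using pn True x ar1[OF IH(1) c3] by (simp add: pstep_def)
    then show ?thesis using snoc.prems(2) st dn_ext x by auto
  next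
    case False
    show ?thesis
    proof (cases "cyc cs (length dn0) = 0")
      case True
      then have "?x = l0" using x IH(1) by simp
      then have "y = l0" using y IH(3) False by auto
      then have "parse s0 (pre @ [y]) = (True, l0, dn0)" using pn False by (simp add: pstep_def)
      then show ?thesis using snoc.prems(2) st IH \<open>?x = l0\<close> True by auto
    next
      case c0: False
      have xl: "?x \<noteq> l0" using x ar3[OF IH(1) _ c3] c0 by simp
      from y show ?thesis
      proof
        assume yx: "y = ?x"
        then have "parse s0 (pre @ [y]) = (False, ?x, dn0 @ [cyc cs (length dn0)])"
          using pn False xl x ar1[OF IH(1) c3] by (simp add: pstep_def)
        then show ?thesis using snoc.prems(2) st dn_ext x by auto
      next
        assume "y = ?s"
        then have "y = l0" using IH(3) False by simp
        then have "parse s0 (pre @ [y]) = (True, l0, dn0)" using pn False by (simp add: pstep_def)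
        then show ?thesis using snoc.prems(2) st IH x by auto
      qed
    qed
  qed
qed

end


context
  fixes s0 L m
  assumes s0: "s0 \<in> alph" and mM: "m < length (mseqs L)"
begin

abbreviation "cs8 \<equiv> mseqs L ! m"

lemma mart_Dp:
  assumes pos: "out_prob (enc s0 L) s0 m pre > 0"
  shows "(\<Sum>y\<in>alph. ising_W (stt (enc s0 L) s0 m pre) (enc s0 L m pre) y * Dp s0 cs8 pre y) = 0"
proof -
  obtain ph l dn where p: "parse s0 pre = (ph, l, dn)" by (metis prod_cases3)
  have I: "l < 3" "dn = map (cyc cs8) [0..<length dn]"
      "stt (enc s0 L) s0 m pre = (if ph then (l + cyc cs8 (length dn)) mod 3 else l)"
    using invariant[OF s0 mM pos p] by auto
  let ?c = "cyc cs8 (length dn)"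
  have c3: "?c < 3" by (rule cyc_lt3[OF s0 mM])
  have x: "enc s0 L m pre = (l + ?c) mod 3" by (simp add: enc_def p)
  have sx: "stt (enc s0 L) s0 m pre \<in> alph" "enc s0 L m pre \<in> alph"
    using enc_valid s0 by (auto simp: stt_alph valid_encoder_def)
  have e: "(\<Sum>y\<in>alph. ising_W (stt (enc s0 L) s0 m pre) (enc s0 L m pre) y * Dp s0 cs8 pre y)
      = Dp s0 cs8 pre (enc s0 L m pre) / 2 + Dp s0 cs8 pre (stt (enc s0 L) s0 m pre) / 2"
    by (rule W_sum[OF sx])
  have D: "Dp s0 cs8 pre y = real (Phi cs8 (pstep (ph, l, dn) y)) - real (Phi cs8 (ph, l, dn)) - 2" for y
    by (simp add: Dp_def parse_snoc p)
  show ?thesis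
  proof (cases ph)
    case True
    have "Dp s0 cs8 pre ((l + ?c) mod 3) = 0"
      unfolding D using True ar1[OF I(1) c3] by (simp add: pstep_def Phi_def cost_def)
    then show ?thesis unfolding e using I(3) True x by simp
  next
    case False
    show ?thesis
    proof (cases "?c = 0")
      case True
      have "Dp s0 cs8 pre l = 0" unfolding D using False True by (simp add: pstep_def Phi_def)
      then show ?thesis unfolding e using I False True x by simp
    next
      case c0: False
      have xl: "(l + ?c) mod 3 \<noteq> l" using ar3[OF I(1) _ c3] c0 by simp
      have "Dp s0 cs8 pre ((l + ?c) mod 3) = 1"
        unfolding D using False xl ar1[OF I(1) c3] c0 by (simp add: pstep_def Phi_def cost_def)
      moreover have "Dp s0 cs8 pre l = -1" unfolding D using False c0 by (simp add: pstep_def Phi_def)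
      ultimately show ?thesis unfolding e using I False x by simp
    qed
  qed
qed

lemma incomplete:
  assumes pos: "out_prob (enc s0 L) s0 m ys > 0" and p: "parse s0 ys = (ph, l, dn)"
    and short: "length dn < length cs8"
  shows "Phi cs8 (parse s0 ys) < costsum cs8"
proof -
  have I: "dn = map (cyc cs8) [0..<length dn]" using invariant[OF s0 mM pos p] by auto
  let ?k = "length dn"
  have "map (cyc cs8) [0..<?k] = take ?k cs8"
    using short by (intro nth_equalityI) (auto simp: cyc_def)
  then have dn: "dn = take ?k cs8" using I by simp
  have ck: "cyc cs8 ?k = cs8 ! ?k" using short by (simp add: cyc_def)
  have "cs8 = take ?k cs8 @ [cs8 ! ?k] @ drop (Suc ?k) cs8"
    using short by (simp add: id_take_nth_drop)
  then have "costsum cs8 = costsum (take ?k cs8 @ [cs8 ! ?k] @ drop (Suc ?k) cs8)"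
    by (rule arg_cong)
  then have "costsum cs8 = costsum (take ?k cs8) + cost (cs8 ! ?k) + costsum (drop (Suc ?k) cs8)"
    by simp
  moreover have "Phi cs8 (parse s0 ys) < costsum (take ?k cs8) + cost (cs8 ! ?k)"
    unfolding p Phi_def using dn ck by (auto simp: cost_def)
  ultimately show ?thesis by linarith
qed

lemma complete:
  assumes pos: "out_prob (enc s0 L) s0 m ys > 0" and p: "parse s0 ys = (ph, l, dn)"
    and long: "length cs8 \<le> length dn"
  shows "dec s0 L ys = m"
proof -
  have I: "dn = map (cyc cs8) [0..<length dn]" using invariant[OF s0 mM pos p] by auto
  have pre: "isprefix cs8 dn"
  proof -
    have "take (length cs8) dn = map (cyc cs8) [0..<length cs8]"
      using long by (subst I) (simp add: take_map)
    also have "\<dots> = cs8" by (intro nth_equalityI) (auto simp: cyc_def)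
    finally show ?thesis by (simp add: isprefix_def)
  qed
  have uniq: "i = m" if i: "i < length (mseqs L)" "isprefix (mseqs L ! i) dn" for i
  proof -
    let ?a = "mseqs L ! i"
    have ina: "?a \<in> set (mseqs L)" "cs8 \<in> set (mseqs L)" using i mM by auto
    have "?a = cs8"
    proof (cases "length ?a \<le> length cs8")
      case True
      have "take (length ?a) cs8 = take (length ?a) (take (length cs8) dn)"
        using pre by (simp add: isprefix_def)
      also have "\<dots> = ?a" using True i(2) by (simp add: isprefix_def min_def)
      finally show ?thesis using mseqs_prefix_free[OF ina] by (simp add: isprefix_def)
    next
      case False
      have "take (length cs8) ?a = take (length cs8) (take (length ?a) dn)"
        using i(2) by (simp add: isprefix_def)
      also have "\<dots> = cs8" using False pre by (simp add: isprefix_def min_def)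
      finally show ?thesis using mseqs_prefix_free[OF ina(2) ina(1)] by (simp add: isprefix_def)
    qed
    then show ?thesis using mseqs_distinct i mM by (simp add: nth_eq_iff_index_eq)
  qed
  show ?thesis unfolding dec_def p
  proof (rule Least_equality)
    show "m < length (mseqs L) \<and> isprefix cs8 (snd (snd (ph, l, dn)))" using mM pre by simp
  next
    fix i assume "i < length (mseqs L) \<and> isprefix (mseqs L ! i) (snd (snd (ph, l, dn)))"
    then have "i = m" using uniq by simp
    then show "m \<le> i" by simp
  qed
qed

lemma err_bound:
  assumes Ln: "real L < 2 * real n"
  shows "(\<Sum>ys\<in>out_seqs n. if dec s0 L ys = m then 0 else out_prob (enc s0 L) s0 m ys)
          \<le> real n * 4 / (2 * real n - real L)\<^sup>2"
proof -
  have a: "2 * real n - real L > 0" using Ln by simp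
  have "(\<Sum>ys\<in>out_seqs n. if dec s0 L ys \<noteq> m then out_prob (enc s0 L) s0 m ys else 0)
          \<le> real n * 2\<^sup>2 / (2 * real n - real L)\<^sup>2"
  proof (rule chebyshev[OF enc_valid s0 Dp_bound _ a])
    show "(\<Sum>y\<in>alph. ising_W (stt (enc s0 L) s0 m ys) (enc s0 L m ys) y * Dp s0 cs8 ys y) = 0"
      if "out_prob (enc s0 L) s0 m ys > 0" for ys using mart_Dp that by blast
  next
    fix ys assume ys: "ys \<in> out_seqs n" and pos: "out_prob (enc s0 L) s0 m ys > 0"
      and E: "dec s0 L ys \<noteq> m"
    obtain ph l dn where p: "parse s0 ys = (ph, l, dn)" by (metis prod_cases3)
    have short: "length dn < length cs8" using complete[OF pos p] E by linarith
    have "Phi cs8 (parse s0 ys) < costsum cs8" by (rule incomplete[OF pos p short])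
    then have "real (Phi cs8 (parse s0 ys)) < real L" using cs_elems(2)[OF s0 mM] by linarith
    moreover have "length ys = n" using ys by (simp add: out_seqs_def)
    ultimately have "Ssum (Dp s0 cs8) ys < real L - 2 * real n" by (simp add: Ssum_Dp)
    then show "2 * real n - real L \<le> \<bar>Ssum (Dp s0 cs8) ys\<bar>" by linarith
  qed
  moreover have "(\<Sum>ys\<in>out_seqs n. if dec s0 L ys = m then 0 else out_prob (enc s0 L) s0 m ys)
     = (\<Sum>ys\<in>out_seqs n. if dec s0 L ys \<noteq> m then out_prob (enc s0 L) s0 m ys else 0)"
    by (rule sum.cong) auto
  ultimately show ?thesis by simp
qed

end


lemma Cap_pos: "Cap > 0" using Cap_lr lr_bounds by linarith

lemma achievable_lt:
  assumes s0: "s0 \<in> alph" and R0: "0 \<le> R" and RC: "R < Cap"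
  shows "achievable s0 R"
  unfolding achievable_def
proof (intro conjI allI impI)
  show "0 \<le> R" by (rule R0)
  fix \<epsilon> :: real assume eps: "\<epsilon> > 0"
  define \<eta> where "\<eta> = (Cap - R) / (2 * Cap)"
  have eta: "\<eta> > 0" "\<eta> \<le> 1/2" using Cap_pos RC R0 by (auto simp: \<eta>_def field_simps)
  have etaC: "(1 - \<eta>) * Cap = R + (Cap - R) / 2" using Cap_pos by (simp add: \<eta>_def field_simps)
  define K where "K = 5 * Cap / (Cap - R) + 1 / (\<epsilon> * \<eta>\<^sup>2) + 1"
  obtain N :: nat where N: "K < real N" using reals_Archimedean2 by blast
  have Kp: "5 * Cap / (Cap - R) > 0" "1 / (\<epsilon> * \<eta>\<^sup>2) > 0" using Cap_pos RC eps eta by auto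
  show "\<exists>N. \<forall>n\<ge>N. \<exists>M e d. 1 \<le> M \<and> 2 powr (real n * R) \<le> real M \<and> valid_encoder e \<and> avg_err s0 n M e d \<le> \<epsilon>"
  proof (rule exI[of _ N], intro allI impI)
    fix n assume nN: "N \<le> n"
    then have nK: "K < real n" using N by linarith
    have n1: "5 * Cap / (Cap - R) \<le> real n" "1 / (\<epsilon> * \<eta>\<^sup>2) \<le> real n" "real n > 0"
      using nK Kp unfolding K_def by linarith+
    define L where "L = nat \<lfloor>2 * real n * (1 - \<eta>)\<rfloor>"
    have nn: "0 \<le> 2 * real n * (1 - \<eta>)" using eta n1 by simp
    have L1: "real L \<le> 2 * real n * (1 - \<eta>)" unfolding L_def using nn by linarith
    have L2: "real L > 2 * real n * (1 - \<eta>) - 1" unfolding L_def using nn by linarith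
    define M where "M = length (mseqs L)"
    have r: "0 < rr" "rr < 1" using rr_props by auto
    have Mb: "real M * rr^L \<ge> rr^4" unfolding M_def by (rule mseqs_len)
    have rL: "rr^L > 0" using r by simp
    have Mge: "real M \<ge> rr^4 / rr^L" using Mb rL by (simp add: divide_le_eq)
    have pos4: "rr^4 / rr^L > 0" using r by simp
    have M1: "M \<ge> 1"
    proof -
      have "real M > 0" using Mge pos4 by linarith
      then show ?thesis by simp
    qed
    have rate: "2 powr (real n * R) \<le> real M"
    proof -
      have lg: "log 2 (rr^4 / rr^L) = (real L - 4) * Cap / 2"
        using r by (simp add: log_divide log_nat_power Cap_def algebra_simps)
      have "real n * R \<le> (real L - 4) * Cap / 2"
      proof -
        have "(2 * real n * (1 - \<eta>) - 5) * Cap / 2 \<le> (real L - 4) * Cap / 2"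
          using L2 Cap_pos by (intro divide_right_mono mult_right_mono) auto
        moreover have "(2 * real n * (1 - \<eta>) - 5) * Cap / 2 = real n * R + real n * (Cap - R) / 2 - 5 * Cap / 2"
        proof -
          have h: "(2 * real n * (1 - \<eta>) - 5) * Cap / 2 = real n * ((1 - \<eta>) * Cap) - 5 * Cap / 2"
            by (simp add: algebra_simps add_divide_distrib diff_divide_distrib)
          show ?thesis unfolding h etaC by (simp add: algebra_simps add_divide_distrib diff_divide_distrib)
        qed
        moreover have "5 * Cap \<le> real n * (Cap - R)" using n1(1) RC by (simp add: divide_le_eq)
        ultimately show ?thesis by linarith
      qed
      then have "real n * R \<le> log 2 (rr^4 / rr^L)" using lg by simp
      then have "2 powr (real n * R) \<le> rr^4 / rr^L" using pos4 by (simp add: le_log_iff)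
      then show ?thesis using Mge by linarith
    qed
    have L1': "real L \<le> 2 * real n - 2 * (real n * \<eta>)" using L1 by (simp add: algebra_simps)
    have neta: "0 < real n * \<eta>" using eta n1 by simp
    have LN: "real L < 2 * real n" using L1' neta by linarith
    have gap: "2 * real n * \<eta> \<le> 2 * real n - real L" using L1' by linarith
    have each: "(\<Sum>ys\<in>out_seqs n. if dec s0 L ys = m then 0 else out_prob (enc s0 L) s0 m ys) \<le> \<epsilon>"
      if m: "m < M" for m
    proof -
      have "(\<Sum>ys\<in>out_seqs n. if dec s0 L ys = m then 0 else out_prob (enc s0 L) s0 m ys)
          \<le> real n * 4 / (2 * real n - real L)\<^sup>2"
        by (rule err_bound[OF s0 m[unfolded M_def] LN])
      also have "\<dots> \<le> real n * 4 / (2 * real n * \<eta>)\<^sup>2"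
      proof (rule divide_left_mono)
        have "0 \<le> 2 * real n * \<eta>" using neta by linarith
        then show "(2 * real n * \<eta>)\<^sup>2 \<le> (2 * real n - real L)\<^sup>2" by (rule power_mono[OF gap])
        show "0 \<le> real n * 4" by simp
        have "0 < 2 * real n * \<eta>" using neta by linarith
        moreover have "0 < 2 * real n - real L" using LN by linarith
        ultimately show "0 < (2 * real n - real L)\<^sup>2 * (2 * real n * \<eta>)\<^sup>2" using eta n1 by (intro mult_pos_pos zero_less_power) auto
      qed
      also have "\<dots> = 1 / (real n * \<eta>\<^sup>2)"
        using eta n1 by (simp add: field_simps power2_eq_square)
      also have "\<dots> \<le> \<epsilon>"
      proof -
        have "1 \<le> real n * (\<epsilon> * \<eta>\<^sup>2)" using n1(2) eps eta by (simp add: divide_le_eq)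
        then show ?thesis using eta n1 eps by (simp add: divide_le_eq algebra_simps)
      qed
      finally show ?thesis .
    qed
    have "avg_err s0 n M (enc s0 L) (dec s0 L) \<le> (1 / real M) * (\<Sum>m<M. \<epsilon>)"
      unfolding avg_err_def using M1 by (intro mult_left_mono sum_mono each) auto
    also have "\<dots> = \<epsilon>" using M1 by simp
    finally have "avg_err s0 n M (enc s0 L) (dec s0 L) \<le> \<epsilon>" .
    then show "\<exists>M e d. 1 \<le> M \<and> 2 powr (real n * R) \<le> real M \<and> valid_encoder e \<and> avg_err s0 n M e d \<le> \<epsilon>"
      using M1 rate enc_valid by blast
  qed
qed

lemma capacity_eq:
  assumes s0: "s0 \<in> alph"
  shows "fb_capacity s0 = Cap"
  unfolding fb_capacity_def
proof (rule cSup_eq_non_empty)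
  show "{R. achievable s0 R} \<noteq> {}" using achievable_lt[OF s0 order_refl Cap_pos] by blast
  show "x \<le> Cap" if "x \<in> {R. achievable s0 R}" for x using converse[OF s0] that by simp
  fix y assume ub: "\<And>x. x \<in> {R. achievable s0 R} \<Longrightarrow> x \<le> y"
  show "Cap \<le> y"
  proof (rule ccontr)
    assume "\<not> Cap \<le> y"
    define R where "R = max 0 ((y + Cap) / 2)"
    have "0 \<le> R" "R < Cap" using \<open>\<not> Cap \<le> y\<close> Cap_pos by (auto simp: R_def)
    then have "achievable s0 R" by (intro achievable_lt[OF s0])
    then have "R \<le> y" using ub by simp
    moreover have "R > y"
    proof -
      have "y < Cap" using \<open>\<not> Cap \<le> y\<close> by (simp add: not_le)
      then have "y < (y + Cap) / 2" by (simp add: field_simps)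
      moreover have "(y + Cap) / 2 \<le> R" by (simp add: R_def)
      ultimately show ?thesis by linarith
    qed
    ultimately show False by simp
  qed
qed

lemma sup_rate: "(SUP p \<in> {0..1}. ising3_rate p) = Cap"
proof (rule cSup_eq_maximum)
  have "rr^4 \<in> {0..1::real}" using rr_props by (auto simp: power_le_one)
  then show "Cap \<in> ising3_rate ` {0..1}" using rate_at by (metis image_eqI)
  show "x \<le> Cap" if "x \<in> ising3_rate ` {0..1}" for x using that rate_le by auto
qed

theorem theorem3:
  assumes "s0 \<in> alph"
  shows "fb_capacity s0 = (SUP p \<in> {0..1}. ising3_rate p)
    \<and> \<bar>fb_capacity s0 - 0.961227\<bar> \<le> 0.0000005
    \<and> (\<exists>p\<in>{0..1}. ising3_rate p = fb_capacity s0 \<and> \<bar>p - 0.263805\<bar> \<le> 0.0000005)"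
proof -
  have c: "fb_capacity s0 = Cap" by (rule capacity_eq[OF assms])
  have "rr^4 \<in> {0..1::real}" using rr_props by (auto simp: power_le_one)
  then show ?thesis unfolding c sup_rate using Cap_bound rate_at rr4_bound by blast
qed


end
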